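(* Let $X$ be a semiSegal space and $x\in X_0$ an object. Let $X^{\mathrm{qu}}_x\subseteq \mathrm{Map}_X(x,x)$ be the maximal sub-simplicial set spanned by those vertices (points) of $\mathrm{Map}_X(x,x)$ which are quasi-units. If $X^{\mathrm{qu}}_x$ is non-empty, then it is connected.
   Context: Spaces are simplicial sets with the Kan–Quillen model structure; $\mathrm{Ho}(\mathrm{sSet})$ is its homotopy category. $\Delta_s$ is the category of finite ordinals $[n]=\{0,\dots,n\}$ and injective order-preserving maps; a semi-simplicial space is a functor $X:\Delta_s^{op}\to\mathrm{sSet}$, $X_n=X([n])$. For $\sigma\in X_n$ and $I\subseteq[n]$, $\sigma|_{\Delta^I}$ denotes the restriction to the face spanned by $I$. $X$ is Reedy fibrant if for every $n$ the map from $X_n$ to its matching object (the space of compatible families of boundary faces) is a Kan fibration. $X$ satisfies the Segal condition if for all $n,m\ge0$ the square formed by $X_{n+m}\to X_n$ (restriction to $\{0,\dots,n\}$), $X_{n+m}\to X_m$ (restriction to $\{n,\dots,n+m\}$), $X_n\to X_0$ (vertex $n$), $X_m\to X_0$ (vertex $0$) is homotopy cartesian. A semiSegal space is a Reedy fibrant semi-simplicial space satisfying the Segal condition. Objects are points of $X_0$; for objects $x,y$, $\mathrm{Map}_X(x,y)$ is the fiber over $(x,y)$ of the Kan fibration $X_1\to X_0\times X_0$, $e\mapsto(e|_{\Delta^{\{0\}}},e|_{\Delta^{\{1\}}})$; a point $f$ of it is written $f:x\to y$. For $f:x\to y$ and an object $z$, let $C^R_{f,z}=\{\sigma\in X_2:\sigma|_{\Delta^{\{1,2\}}}=f,\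 \sigma|_{\Delta^{\{0\}}}=z\}$ with restriction maps $\varphi:C^R_{f,z}\to\mathrm{Map}_X(z,x)$ (edge $\{0,1\}$), which is a weak equivalence, and $\psi:C^R_{f,z}\to\mathrm{Map}_X(z,y)$ (edge $\{0,2\}$); set $[f]_*=[\psi]\circ[\varphi]^{-1}$ in $\mathrm{Ho}(\mathrm{sSet})$. Dually, $C^L_{f,z}=\{\sigma\in X_2:\sigma|_{\Delta^{\{0,1\}}}=f,\ \sigma|_{\Delta^{\{2\}}}=z\}$ with the weak equivalence restriction to $\mathrm{Map}_X(y,z)$ (edge $\{1,2\}$) and restriction to $\mathrm{Map}_X(x,z)$ (edge $\{0,2\}$) defines $[f]^*:\mathrm{Map}_X(y,z)\to\mathrm{Map}_X(x,z)$ in $\mathrm{Ho}(\mathrm{sSet})$. A morphism $f:x\to x$ is a quasi-unit if for every object $z$, both $[f]_*$ and $[f]^*$ are identities in $\mathrm{Ho}(\mathrm{sSet})$. *)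

theory Defs
  imports Main
begin

text \<open>A monotone map [m] -> [n] is encoded as a function nat => nat, only its values
on {0..m} matter.\<close>

definition mono_map :: "nat \<Rightarrow> nat \<Rightarrow> (nat \<Rightarrow> nat) \<Rightarrow> bool" where
  "mono_map m n \<alpha> \<longleftrightarrow> (\<forall>i\<le>m. \<alpha> i \<le> n) \<and> (\<forall>i j. i \<le> j \<and> j \<le> m \<longrightarrow> \<alpha> i \<le> \<alpha> j)"

definition inj_mono :: "nat \<Rightarrow> nat \<Rightarrow> (nat \<Rightarrow> nat) \<Rightarrow> bool" where
  "inj_mono m n \<delta> \<longleftrightarrow> (\<forall>i\<le>m. \<delta> i \<le> n) \<and> (\<forall>i j. i < j \<and> j \<le> m \<longrightarrow> \<delta> i < \<delta> j)"

definition face_map :: "nat \<Rightarrow> nat \<Rightarrow> nat" where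
  "face_map i = (\<lambda>j. if j < i then j else Suc j)"

text \<open>sset_carrier A n = the n-simplices; sset_act A n m \<alpha> : A_n -> A_m for \<alpha> : [m] -> [n].\<close>
record 'a sset =
  sset_carrier :: "nat \<Rightarrow> 'a set"
  sset_act :: "nat \<Rightarrow> nat \<Rightarrow> (nat \<Rightarrow> nat) \<Rightarrow> 'a \<Rightarrow> 'a"

definition is_sset :: "('a, 'b) sset_scheme \<Rightarrow> bool" where
  "is_sset A \<longleftrightarrow>
     (\<forall>n m \<alpha> a. mono_map m n \<alpha> \<and> a \<in> sset_carrier A n \<longrightarrow> sset_act A n m \<alpha> a \<in> sset_carrier A m) \<and>
     (\<forall>n a. a \<in> sset_carrier A n \<longrightarrow> sset_act A n n (\<lambda>i. i) a = a) \<and>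
     (\<forall>n m p \<alpha> \<beta> a. mono_map m n \<alpha> \<and> mono_map p m \<beta> \<and> a \<in> sset_carrier A n \<longrightarrow>
        sset_act A m p \<beta> (sset_act A n m \<alpha> a) = sset_act A n p (\<alpha> \<circ> \<beta>) a) \<and>
     (\<forall>n m \<alpha> \<alpha>' a. (\<forall>i\<le>m. \<alpha> i = \<alpha>' i) \<and> a \<in> sset_carrier A n \<longrightarrow>
        sset_act A n m \<alpha> a = sset_act A n m \<alpha>' a)"

definition simplicial_map :: "('a, 'c) sset_scheme \<Rightarrow> ('b, 'd) sset_scheme \<Rightarrow> ('a \<Rightarrow> 'b) \<Rightarrow> bool" where
  "simplicial_map A B f \<longleftrightarrow>
     (\<forall>n a. a \<in> sset_carrier A n \<longrightarrow> f a \<in> sset_carrier B n) \<and>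
     (\<forall>n m \<alpha> a. mono_map m n \<alpha> \<and> a \<in> sset_carrier A n \<longrightarrow>
        f (sset_act A n m \<alpha> a) = sset_act B n m \<alpha> (f a))"

text \<open>Sub-simplicial set cut out by a (simplicially closed) predicate.\<close>
definition sub_sset :: "'a sset \<Rightarrow> (nat \<Rightarrow> 'a \<Rightarrow> bool) \<Rightarrow> 'a sset" where
  "sub_sset A P = \<lparr> sset_carrier = (\<lambda>n. {a \<in> sset_carrier A n. P n a}), sset_act = sset_act A \<rparr>"

definition prod_sset :: "'a sset \<Rightarrow> 'b sset \<Rightarrow> ('a \<times> 'b) sset" where
  "prod_sset A B = \<lparr> sset_carrier = (\<lambda>n. sset_carrier A n \<times> sset_carrier B n),
     sset_act = (\<lambda>n m \<alpha> p. (sset_act A n m \<alpha> (fst p), sset_act B n m \<alpha> (snd p))) \<rparr>"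

definition point_sset :: "unit sset" where
  "point_sset = \<lparr> sset_carrier = (\<lambda>n. UNIV), sset_act = (\<lambda>n m \<alpha> x. x) \<rparr>"

text \<open>The standard 1-simplex: n-simplices are monotone maps [n] -> [1] (normalised to 0 outside [n]).\<close>
definition delta1 :: "(nat \<Rightarrow> nat) sset" where
  "delta1 = \<lparr> sset_carrier = (\<lambda>n. {t. mono_map n 1 t \<and> (\<forall>j>n. t j = 0)}),
     sset_act = (\<lambda>n m \<alpha> t. (\<lambda>j. if j \<le> m then t (\<alpha> j) else 0)) \<rparr>"

definition const_simplex :: "nat \<Rightarrow> nat \<Rightarrow> (nat \<Rightarrow> nat)" where
  "const_simplex n e = (\<lambda>j. if j \<le> n then e else 0)"

text \<open>Kan fibrations via horn lifting: a horn Lambda^n_k -> A is a compatible family of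
(n-1)-simplices y_i, i \<noteq> k.\<close>
definition kan_fibration :: "'a sset \<Rightarrow> 'b sset \<Rightarrow> ('a \<Rightarrow> 'b) \<Rightarrow> bool" where
  "kan_fibration A B p \<longleftrightarrow> simplicial_map A B p \<and>
     (\<forall>n k y \<tau>. 1 \<le> n \<and> k \<le> n \<and>
        (\<forall>i\<le>n. i \<noteq> k \<longrightarrow> y i \<in> sset_carrier A (n - 1)) \<and>
        (\<forall>i j. i < j \<and> j \<le> n \<and> i \<noteq> k \<and> j \<noteq> k \<longrightarrow>
            sset_act A (n - 1) (n - 2) (face_map i) (y j) = sset_act A (n - 1) (n - 2) (face_map (j - 1)) (y i)) \<and>
        \<tau> \<in> sset_carrier B n \<and>
        (\<forall>i\<le>n. i \<noteq> k \<longrightarrow> sset_act B n (n - 1) (face_map i) \<tau> = p (y i))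
      \<longrightarrow> (\<exists>\<sigma>\<in>sset_carrier A n. p \<sigma> = \<tau> \<and>
             (\<forall>i\<le>n. i \<noteq> k \<longrightarrow> sset_act A n (n - 1) (face_map i) \<sigma> = y i)))"

definition kan_complex :: "'a sset \<Rightarrow> bool" where
  "kan_complex A \<longleftrightarrow> kan_fibration A point_sset (\<lambda>_. ())"

text \<open>Simplicial homotopy via the cylinder A x Delta^1 (used for maps into Kan complexes).\<close>
definition homotopic :: "'a sset \<Rightarrow> 'b sset \<Rightarrow> ('a \<Rightarrow> 'b) \<Rightarrow> ('a \<Rightarrow> 'b) \<Rightarrow> bool" where
  "homotopic A B f g \<longleftrightarrow> (\<exists>h. simplicial_map (prod_sset A delta1) B h \<and>
     (\<forall>n a. a \<in> sset_carrier A n \<longrightarrow>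
        h (a, const_simplex n 0) = f a \<and> h (a, const_simplex n 1) = g a))"

definition homotopy_inverse :: "'a sset \<Rightarrow> 'b sset \<Rightarrow> ('a \<Rightarrow> 'b) \<Rightarrow> ('b \<Rightarrow> 'a) \<Rightarrow> bool" where
  "homotopy_inverse A B f g \<longleftrightarrow> simplicial_map A B f \<and> simplicial_map B A g \<and>
     homotopic A A (g \<circ> f) (\<lambda>a. a) \<and> homotopic B B (f \<circ> g) (\<lambda>b. b)"

text \<open>Weak equivalence between Kan complexes = homotopy equivalence.\<close>
definition kan_weq :: "'a sset \<Rightarrow> 'b sset \<Rightarrow> ('a \<Rightarrow> 'b) \<Rightarrow> bool" where
  "kan_weq A B f \<longleftrightarrow> (\<exists>g. homotopy_inverse A B f g)"

text \<open>For Kan complexes A, B and maps phi, psi : A -> B with phi a weak equivalence: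
  [psi] o [phi]^-1 = id_B in Ho(sSet).  Morphisms of Ho(sSet) between Kan complexes are
  homotopy classes of maps; [phi]^-1 is represented by a homotopy inverse g of phi.\<close>
definition ho_comp_inv_is_id :: "'a sset \<Rightarrow> 'b sset \<Rightarrow> ('a \<Rightarrow> 'b) \<Rightarrow> ('a \<Rightarrow> 'b) \<Rightarrow> bool" where
  "ho_comp_inv_is_id A B \<phi> \<psi> \<longleftrightarrow> simplicial_map A B \<psi> \<and>
     (\<exists>g. homotopy_inverse A B \<phi> g \<and> homotopic B B (\<psi> \<circ> g) (\<lambda>b. b))"

definition sset_connected :: "'a sset \<Rightarrow> bool" where
  "sset_connected A \<longleftrightarrow> sset_carrier A 0 \<noteq> {} \<and>
     (let E = {(sset_act A 1 0 (\<lambda>_. 0) e, sset_act A 1 0 (\<lambda>_. 1) e) | e. e \<in> sset_carrier A 1}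
      in \<forall>u\<in>sset_carrier A 0. \<forall>v\<in>sset_carrier A 0. (u, v) \<in> (E \<union> E\<inverse>)\<^sup>*)"

text \<open>ss_lev X n = the space X_n; ss_res X n m \<delta> : X_n -> X_m for injective monotone \<delta> : [m] -> [n].\<close>
record 'a ssspace =
  ss_lev :: "nat \<Rightarrow> 'a sset"
  ss_res :: "nat \<Rightarrow> nat \<Rightarrow> (nat \<Rightarrow> nat) \<Rightarrow> 'a \<Rightarrow> 'a"

definition semi_simplicial_space :: "'a ssspace \<Rightarrow> bool" where
  "semi_simplicial_space X \<longleftrightarrow>
     (\<forall>n. is_sset (ss_lev X n)) \<and>
     (\<forall>n m \<delta>. inj_mono m n \<delta> \<longrightarrow> simplicial_map (ss_lev X n) (ss_lev X m) (ss_res X n m \<delta>)) \<and>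
     (\<forall>n k a. a \<in> sset_carrier (ss_lev X n) k \<longrightarrow> ss_res X n n (\<lambda>i. i) a = a) \<and>
     (\<forall>n m p \<delta> \<epsilon> k a. inj_mono m n \<delta> \<and> inj_mono p m \<epsilon> \<and> a \<in> sset_carrier (ss_lev X n) k \<longrightarrow>
        ss_res X m p \<epsilon> (ss_res X n m \<delta> a) = ss_res X n p (\<delta> \<circ> \<epsilon>) a) \<and>
     (\<forall>n m \<delta> \<delta>' k a. (\<forall>i\<le>m. \<delta> i = \<delta>' i) \<and> a \<in> sset_carrier (ss_lev X n) k \<longrightarrow>
        ss_res X n m \<delta> a = ss_res X n m \<delta>' a)"

definition bidx :: "nat \<Rightarrow> nat set" where
  "bidx N = (if N = 0 then {} else {0..N})"

definition matching :: "'a ssspace \<Rightarrow> nat \<Rightarrow> (nat \<Rightarrow> 'a) sset" where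
  "matching X N = \<lparr> sset_carrier = (\<lambda>k. {\<tau>. (\<forall>i. i \<notin> bidx N \<longrightarrow> \<tau> i = undefined) \<and>
        (\<forall>i\<in>bidx N. \<tau> i \<in> sset_carrier (ss_lev X (N - 1)) k) \<and>
        (2 \<le> N \<longrightarrow> (\<forall>i j. i < j \<and> j \<le> N \<longrightarrow>
           ss_res X (N - 1) (N - 2) (face_map i) (\<tau> j) = ss_res X (N - 1) (N - 2) (face_map (j - 1)) (\<tau> i)))}),
     sset_act = (\<lambda>k k' \<alpha> \<tau>. (\<lambda>i. if i \<in> bidx N then sset_act (ss_lev X (N - 1)) k k' \<alpha> (\<tau> i) else undefined)) \<rparr>"

definition boundary_map :: "'a ssspace \<Rightarrow> nat \<Rightarrow> 'a \<Rightarrow> (nat \<Rightarrow> 'a)" where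
  "boundary_map X N \<sigma> = (\<lambda>i. if i \<in> bidx N then ss_res X N (N - 1) (face_map i) \<sigma> else undefined)"

definition reedy_fibrant :: "'a ssspace \<Rightarrow> bool" where
  "reedy_fibrant X \<longleftrightarrow> (\<forall>N. kan_fibration (ss_lev X N) (matching X N) (boundary_map X N))"

text \<open>Strict fibre product X_n x_{X_0} X_m (over vertex n of [n] and vertex 0 of [m]).\<close>
definition segal_pullback :: "'a ssspace \<Rightarrow> nat \<Rightarrow> nat \<Rightarrow> ('a \<times> 'a) sset" where
  "segal_pullback X n m = \<lparr> sset_carrier = (\<lambda>k. {(a, b). a \<in> sset_carrier (ss_lev X n) k \<and>
        b \<in> sset_carrier (ss_lev X m) k \<and> ss_res X n 0 (\<lambda>_. n) a = ss_res X m 0 (\<lambda>_. 0) b}),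
     sset_act = (\<lambda>k k' \<alpha> p. (sset_act (ss_lev X n) k k' \<alpha> (fst p), sset_act (ss_lev X m) k k' \<alpha> (snd p))) \<rparr>"

definition segal_map :: "'a ssspace \<Rightarrow> nat \<Rightarrow> nat \<Rightarrow> 'a \<Rightarrow> 'a \<times> 'a" where
  "segal_map X n m \<sigma> = (ss_res X (n + m) n (\<lambda>i. i) \<sigma>, ss_res X (n + m) m (\<lambda>i. i + n) \<sigma>)"

text \<open>For Reedy fibrant X the map X_m -> X_0 is a Kan fibration, so the square
is homotopy cartesian iff the comparison map to the strict pullback is a weak equivalence
(a homotopy equivalence, all objects being Kan complexes).\<close>
definition segal_condition :: "'a ssspace \<Rightarrow> bool" where
  "segal_condition X \<longleftrightarrow> (\<forall>n m. kan_weq (ss_lev X (n + m)) (segal_pullback X n m) (segal_map X n m))"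

definition semiSegal :: "'a ssspace \<Rightarrow> bool" where
  "semiSegal X \<longleftrightarrow> semi_simplicial_space X \<and> reedy_fibrant X \<and> segal_condition X"

definition vtx :: "nat \<Rightarrow> nat \<Rightarrow> nat" where "vtx i = (\<lambda>_. i)"
definition edge :: "nat \<Rightarrow> nat \<Rightarrow> nat \<Rightarrow> nat" where "edge i j = (\<lambda>l. if l = 0 then i else j)"

definition degen :: "'a ssspace \<Rightarrow> nat \<Rightarrow> nat \<Rightarrow> 'a \<Rightarrow> 'a" where
  "degen X n k v = sset_act (ss_lev X n) 0 k (\<lambda>_. 0) v"

definition mapsp :: "'a ssspace \<Rightarrow> 'a \<Rightarrow> 'a \<Rightarrow> 'a sset" where
  "mapsp X x y = sub_sset (ss_lev X 1) (\<lambda>k e.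
      ss_res X 1 0 (vtx 0) e = degen X 0 k x \<and> ss_res X 1 0 (vtx 1) e = degen X 0 k y)"

definition CR :: "'a ssspace \<Rightarrow> 'a \<Rightarrow> 'a \<Rightarrow> 'a sset" where
  "CR X f z = sub_sset (ss_lev X 2) (\<lambda>k \<sigma>.
      ss_res X 2 1 (edge 1 2) \<sigma> = degen X 1 k f \<and> ss_res X 2 0 (vtx 0) \<sigma> = degen X 0 k z)"

definition CL :: "'a ssspace \<Rightarrow> 'a \<Rightarrow> 'a \<Rightarrow> 'a sset" where
  "CL X f z = sub_sset (ss_lev X 2) (\<lambda>k \<sigma>.
      ss_res X 2 1 (edge 0 1) \<sigma> = degen X 1 k f \<and> ss_res X 2 0 (vtx 2) \<sigma> = degen X 0 k z)"

text \<open>f : x -> x is a quasi-unit: [f]_* = id and [f]^* = id for every object z.\<close>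
definition quasi_unit :: "'a ssspace \<Rightarrow> 'a \<Rightarrow> 'a \<Rightarrow> bool" where
  "quasi_unit X x f \<longleftrightarrow> f \<in> sset_carrier (mapsp X x x) 0 \<and>
     (\<forall>z\<in>sset_carrier (ss_lev X 0) 0.
        ho_comp_inv_is_id (CR X f z) (mapsp X z x) (ss_res X 2 1 (edge 0 1)) (ss_res X 2 1 (edge 0 2)) \<and>
        ho_comp_inv_is_id (CL X f z) (mapsp X x z) (ss_res X 2 1 (edge 1 2)) (ss_res X 2 1 (edge 0 2)))"

definition qu_sub :: "'a ssspace \<Rightarrow> 'a \<Rightarrow> 'a sset" where
  "qu_sub X x = sub_sset (mapsp X x x) (\<lambda>k e.
      \<forall>v\<le>k. quasi_unit X x (sset_act (mapsp X x x) k 0 (\<lambda>_. v) e))"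

end

theory Submission
  imports Defs
begin

lemma inj_mono_mono: "inj_mono m n d \<Longrightarrow> mono_map m n d"
  unfolding inj_mono_def mono_map_def by (metis le_eq_less_or_eq order.strict_trans2)

lemma mono_const: "v \<le> n \<Longrightarrow> mono_map m n (\<lambda>_. v)"
  by (simp add: mono_map_def)

lemma inj_const: "v \<le> n \<Longrightarrow> inj_mono 0 n (\<lambda>_. v)"
  by (simp add: inj_mono_def)

lemma mono_face12: "i \<le> 2 \<Longrightarrow> mono_map 1 2 (face_map i)"
  by (auto simp: mono_map_def face_map_def)
lemma mono_face01: "i \<le> 1 \<Longrightarrow> mono_map 0 1 (face_map i)"
  by (auto simp: mono_map_def face_map_def)
lemma inj_face12: "i \<le> 2 \<Longrightarrow> inj_mono 1 2 (face_map i)"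
  by (auto simp: inj_mono_def face_map_def)
lemma inj_face01: "i \<le> 1 \<Longrightarrow> inj_mono 0 1 (face_map i)"
  by (auto simp: inj_mono_def face_map_def)
lemma inj_edge: "i < j \<Longrightarrow> j \<le> 2 \<Longrightarrow> inj_mono 1 2 (edge i j)"
  by (auto simp: inj_mono_def edge_def)
lemma inj_vtx: "i \<le> n \<Longrightarrow> inj_mono 0 n (vtx i)"
  by (auto simp: inj_mono_def vtx_def)

lemma ss_closed: "is_sset A \<Longrightarrow> mono_map m n \<alpha> \<Longrightarrow> a \<in> sset_carrier A n \<Longrightarrow>
   sset_act A n m \<alpha> a \<in> sset_carrier A m"
  unfolding is_sset_def by blast

lemma ss_comp: "is_sset A \<Longrightarrow> mono_map m n \<alpha> \<Longrightarrow> mono_map p m \<beta> \<Longrightarrow> a \<in> sset_carrier A n \<Longrightarrow>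
   sset_act A m p \<beta> (sset_act A n m \<alpha> a) = sset_act A n p (\<alpha> \<circ> \<beta>) a"
  unfolding is_sset_def by blast

lemma ss_ext: "is_sset A \<Longrightarrow> (\<forall>i\<le>m. \<alpha> i = \<alpha>' i) \<Longrightarrow> a \<in> sset_carrier A n \<Longrightarrow>
   sset_act A n m \<alpha> a = sset_act A n m \<alpha>' a"
  unfolding is_sset_def by blast

lemma ss_id: "is_sset A \<Longrightarrow> a \<in> sset_carrier A n \<Longrightarrow> sset_act A n n (\<lambda>i. i) a = a"
  unfolding is_sset_def by blast

lemma ss_id0: "is_sset A \<Longrightarrow> a \<in> sset_carrier A 0 \<Longrightarrow> sset_act A 0 0 (\<lambda>_. 0) a = a"
proof -
  assume A: "is_sset A" and a: "a \<in> sset_carrier A 0"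
  have "sset_act A 0 0 (\<lambda>_. 0) a = sset_act A 0 0 (\<lambda>i. i) a"
    by (rule ss_ext[OF A _ a]) simp
  also have "\<dots> = a" using ss_id[OF A a] .
  finally show ?thesis .
qed

lemma ss_vert_ext: "is_sset A \<Longrightarrow> a \<in> sset_carrier A n \<Longrightarrow>
   sset_act A n 0 \<alpha> a = sset_act A n 0 (\<lambda>_. \<alpha> 0) a"
  by (rule ss_ext) auto

lemma ss_vert_degen: "is_sset A \<Longrightarrow> a \<in> sset_carrier A 0 \<Longrightarrow> v \<le> 1 \<Longrightarrow>
   sset_act A 1 0 (\<lambda>_. v) (sset_act A 0 1 (\<lambda>_. 0) a) = a"
proof -
  assume A: "is_sset A" and a: "a \<in> sset_carrier A 0" and v: "v \<le> 1"
  have "sset_act A 1 0 (\<lambda>_. v) (sset_act A 0 1 (\<lambda>_. 0) a) = sset_act A 0 0 ((\<lambda>_. 0) \<circ> (\<lambda>_. v)) a"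
    by (rule ss_comp[OF A mono_const mono_const a]) (use v in auto)
  also have "\<dots> = a" using ss_id0[OF A a] by (simp add: o_def)
  finally show ?thesis .
qed

lemma ss_degen_closed: "is_sset A \<Longrightarrow> a \<in> sset_carrier A 0 \<Longrightarrow>
   sset_act A 0 1 (\<lambda>_. 0) a \<in> sset_carrier A 1"
  by (rule ss_closed) (auto simp: mono_const)

lemma ss_vert_face: "is_sset A \<Longrightarrow> a \<in> sset_carrier A 2 \<Longrightarrow> i \<le> 2 \<Longrightarrow> v \<le> 1 \<Longrightarrow>
   sset_act A 1 0 (\<lambda>_. v) (sset_act A 2 1 (face_map i) a) = sset_act A 2 0 (\<lambda>_. face_map i v) a"
proof -
  assume A: "is_sset A" and a: "a \<in> sset_carrier A 2" and i: "i \<le> 2" and v: "v \<le> 1"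
  have "sset_act A 1 0 (\<lambda>_. v) (sset_act A 2 1 (face_map i) a) = sset_act A 2 0 (face_map i \<circ> (\<lambda>_. v)) a"
    by (rule ss_comp[OF A mono_face12[OF i] mono_const a]) (use v in auto)
  then show ?thesis by (simp add: o_def)
qed

lemma ss_vert_face01: "is_sset A \<Longrightarrow> a \<in> sset_carrier A 1 \<Longrightarrow> i \<le> 1 \<Longrightarrow>
   sset_act A 1 0 (face_map i) a = sset_act A 1 0 (\<lambda>_. if i = 0 then 1 else 0) a"
  by (rule ss_ext) (auto simp: face_map_def)

lemma sub_is_sset:
  assumes A: "is_sset A"
    and cl: "\<And>n m \<alpha> a. mono_map m n \<alpha> \<Longrightarrow> a \<in> sset_carrier A n \<Longrightarrow> P n a \<Longrightarrow> P m (sset_act A n m \<alpha> a)"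
  shows "is_sset (sub_sset A P)"
  using A cl unfolding is_sset_def sub_sset_def by auto

definition edge_rel :: "'a sset \<Rightarrow> 'a \<Rightarrow> 'a \<Rightarrow> bool" where
  "edge_rel A u v \<longleftrightarrow> (\<exists>e\<in>sset_carrier A 1. sset_act A 1 0 (\<lambda>_. 0) e = u \<and> sset_act A 1 0 (\<lambda>_. 1) e = v)"

lemma edge_rel_map: "simplicial_map A B F \<Longrightarrow> edge_rel A u v \<Longrightarrow> edge_rel B (F u) (F v)"
  unfolding edge_rel_def simplicial_map_def by (metis mono_const zero_le_one order_refl)

lemma homotopic_edge:
  assumes h: "homotopic A B F G" and A: "is_sset A" and a: "a \<in> sset_carrier A 0"
  shows "edge_rel B (F a) (G a)"
proof -
  obtain h where hs: "simplicial_map (prod_sset A delta1) B h"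
    and hfg: "\<And>n a. a \<in> sset_carrier A n \<Longrightarrow> h (a, const_simplex n 0) = F a \<and> h (a, const_simplex n 1) = G a"
    using h unfolding homotopic_def by blast
  define s where "s = sset_act A 0 1 (\<lambda>_. 0) a"
  define \<iota> where "\<iota> = (\<lambda>j::nat. if j \<le> 1 then j else 0)"
  have s1: "s \<in> sset_carrier A 1" unfolding s_def by (rule ss_degen_closed[OF A a])
  have i1: "\<iota> \<in> sset_carrier delta1 1" unfolding delta1_def \<iota>_def by (auto simp: mono_map_def)
  have p1: "(s, \<iota>) \<in> sset_carrier (prod_sset A delta1) 1" using s1 i1 by (simp add: prod_sset_def)
  have v: "sset_act B 1 0 (\<lambda>_. v) (h (s, \<iota>)) = h (a, const_simplex 0 v)" if "v \<le> 1" for v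
  proof -
    have "sset_act B 1 0 (\<lambda>_. v) (h (s, \<iota>)) = h (sset_act (prod_sset A delta1) 1 0 (\<lambda>_. v) (s, \<iota>))"
      using hs p1 that unfolding simplicial_map_def by (metis mono_const)
    also have "sset_act (prod_sset A delta1) 1 0 (\<lambda>_. v) (s, \<iota>) = (sset_act A 1 0 (\<lambda>_. v) s, sset_act delta1 1 0 (\<lambda>_. v) \<iota>)"
      by (simp add: prod_sset_def)
    also have "sset_act delta1 1 0 (\<lambda>_. v) \<iota> = const_simplex 0 v"
      using that by (auto simp: delta1_def \<iota>_def const_simplex_def)
    also have "sset_act A 1 0 (\<lambda>_. v) s = a"
      unfolding s_def using ss_vert_degen[OF A a that] .
    finally show ?thesis .
  qed
  have "h (s, \<iota>) \<in> sset_carrier B 1" using hs p1 unfolding simplicial_map_def by blast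
  then show ?thesis unfolding edge_rel_def using v[of 0] v[of 1] hfg[OF a] by auto
qed

context
  fixes X :: "'a ssspace"
  assumes sss: "semi_simplicial_space X"
begin

lemma lev: "is_sset (ss_lev X n)"
  using sss unfolding semi_simplicial_space_def by blast

lemma res_smap: "inj_mono m n \<delta> \<Longrightarrow> simplicial_map (ss_lev X n) (ss_lev X m) (ss_res X n m \<delta>)"
  using sss unfolding semi_simplicial_space_def by blast

lemma res_closed: "inj_mono m n \<delta> \<Longrightarrow> a \<in> sset_carrier (ss_lev X n) k \<Longrightarrow>
    ss_res X n m \<delta> a \<in> sset_carrier (ss_lev X m) k"
  using res_smap unfolding simplicial_map_def by blast

lemma res_act: "inj_mono m n \<delta> \<Longrightarrow> mono_map k' k \<alpha> \<Longrightarrow> a \<in> sset_carrier (ss_lev X n) k \<Longrightarrow>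
    ss_res X n m \<delta> (sset_act (ss_lev X n) k k' \<alpha> a) = sset_act (ss_lev X m) k k' \<alpha> (ss_res X n m \<delta> a)"
  using res_smap unfolding simplicial_map_def by blast

lemma res_comp: "inj_mono m n \<delta> \<Longrightarrow> inj_mono p m \<epsilon> \<Longrightarrow> a \<in> sset_carrier (ss_lev X n) k \<Longrightarrow>
    ss_res X m p \<epsilon> (ss_res X n m \<delta> a) = ss_res X n p (\<delta> \<circ> \<epsilon>) a"
  using sss unfolding semi_simplicial_space_def by blast

lemma res_ext: "(\<forall>i\<le>m. \<delta> i = \<delta>' i) \<Longrightarrow> a \<in> sset_carrier (ss_lev X n) k \<Longrightarrow>
    ss_res X n m \<delta> a = ss_res X n m \<delta>' a"
  using sss unfolding semi_simplicial_space_def by blast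

lemma degen0: "p \<in> sset_carrier (ss_lev X m) 0 \<Longrightarrow> degen X m 0 p = p"
  unfolding degen_def using ss_id0[OF lev] .

lemma degen_closed: "p \<in> sset_carrier (ss_lev X m) 0 \<Longrightarrow> degen X m k p \<in> sset_carrier (ss_lev X m) k"
  unfolding degen_def by (rule ss_closed[OF lev]) (auto simp: mono_const)

lemma degen_act: "p \<in> sset_carrier (ss_lev X m) 0 \<Longrightarrow> mono_map k' k \<alpha> \<Longrightarrow>
    sset_act (ss_lev X m) k k' \<alpha> (degen X m k p) = degen X m k' p"
  unfolding degen_def by (subst ss_comp[OF lev]) (auto simp: mono_const o_def)

lemma fib_closed: "inj_mono m n \<delta> \<Longrightarrow> p \<in> sset_carrier (ss_lev X m) 0 \<Longrightarrow> mono_map k' k \<alpha> \<Longrightarrow>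
   a \<in> sset_carrier (ss_lev X n) k \<Longrightarrow> ss_res X n m \<delta> a = degen X m k p \<Longrightarrow>
   ss_res X n m \<delta> (sset_act (ss_lev X n) k k' \<alpha> a) = degen X m k' p"
  by (simp add: res_act degen_act)

lemma fib_sub_sset:
  assumes d: "inj_mono m n \<delta>" and p: "p \<in> sset_carrier (ss_lev X m) 0"
    and d': "inj_mono m' n \<delta>'" and p': "p' \<in> sset_carrier (ss_lev X m') 0"
  shows "is_sset (sub_sset (ss_lev X n) (\<lambda>k a. ss_res X n m \<delta> a = degen X m k p \<and> ss_res X n m' \<delta>' a = degen X m' k p'))"
  by (rule sub_is_sset[OF lev]) (use fib_closed[OF d p] fib_closed[OF d' p'] in blast)

lemma mapsp_sset: "x \<in> sset_carrier (ss_lev X 0) 0 \<Longrightarrow> y \<in> sset_carrier (ss_lev X 0) 0 \<Longrightarrow> is_sset (mapsp X x y)"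
  unfolding mapsp_def by (rule fib_sub_sset) (auto simp: inj_mono_def vtx_def)

lemma CR_sset: "f \<in> sset_carrier (ss_lev X 1) 0 \<Longrightarrow> z \<in> sset_carrier (ss_lev X 0) 0 \<Longrightarrow> is_sset (CR X f z)"
  unfolding CR_def by (rule fib_sub_sset) (auto simp: inj_mono_def edge_def vtx_def)

lemma CL_sset: "f \<in> sset_carrier (ss_lev X 1) 0 \<Longrightarrow> z \<in> sset_carrier (ss_lev X 0) 0 \<Longrightarrow> is_sset (CL X f z)"
  unfolding CL_def by (rule fib_sub_sset) (auto simp: inj_mono_def edge_def vtx_def)

end


lemma mapsp_act: "sset_act (mapsp X x y) = sset_act (ss_lev X 1)"
  by (simp add: mapsp_def sub_sset_def)

lemma mapsp_mem: "e \<in> sset_carrier (mapsp X x y) k \<longleftrightarrow> e \<in> sset_carrier (ss_lev X 1) k \<and>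
   ss_res X 1 0 (vtx 0) e = degen X 0 k x \<and> ss_res X 1 0 (vtx 1) e = degen X 0 k y"
  by (simp add: mapsp_def sub_sset_def)

context
  fixes X :: "'a ssspace" and x :: 'a
  assumes sss: "semi_simplicial_space X" and rf: "reedy_fibrant X"
    and x: "x \<in> sset_carrier (ss_lev X 0) 0"
begin

lemma mapsp_face: "e \<in> sset_carrier (mapsp X x x) k \<Longrightarrow> l \<le> 1 \<Longrightarrow> ss_res X 1 0 (face_map l) e = degen X 0 k x"
proof -
  assume e: "e \<in> sset_carrier (mapsp X x x) k" and l: "l \<le> 1"
  have e1: "e \<in> sset_carrier (ss_lev X 1) k" using e by (simp add: mapsp_mem)
  have "ss_res X 1 0 (face_map l) e = ss_res X 1 0 (vtx (if l = 0 then 1 else 0)) e"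
    by (rule res_ext[OF sss _ e1]) (auto simp: face_map_def vtx_def)
  then show ?thesis using e l by (auto simp: mapsp_mem split: if_splits)
qed

lemma mapsp_fill:
  assumes k: "k \<le> 2"
   and y: "\<forall>i\<le>2. i \<noteq> k \<longrightarrow> y i \<in> sset_carrier (mapsp X x x) 1"
   and c: "\<forall>i j. i < j \<and> j \<le> 2 \<and> i \<noteq> k \<and> j \<noteq> k \<longrightarrow>
      sset_act (ss_lev X 1) 1 0 (face_map i) (y j) = sset_act (ss_lev X 1) 1 0 (face_map (j - 1)) (y i)"
  shows "\<exists>\<sigma>\<in>sset_carrier (mapsp X x x) 2. \<forall>i\<le>2. i \<noteq> k \<longrightarrow> sset_act (ss_lev X 1) 2 1 (face_map i) \<sigma> = y i"
proof -
  have kf: "kan_fibration (ss_lev X 1) (matching X 1) (boundary_map X 1)"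
    using rf unfolding reedy_fibrant_def by blast
  define \<tau> where "\<tau> = (\<lambda>i. if i \<in> bidx 1 then degen X 0 2 x else undefined)"
  have \<tau>: "\<tau> \<in> sset_carrier (matching X 1) 2"
    unfolding matching_def \<tau>_def using degen_closed[OF sss x] by simp
  have bd: "sset_act (matching X 1) 2 1 (face_map i) \<tau> = boundary_map X 1 (y i)" if "i \<le> 2" "i \<noteq> k" for i
  proof
    fix j
    have yi: "y i \<in> sset_carrier (mapsp X x x) 1" using y that by blast
    have "sset_act (ss_lev X 0) 2 1 (face_map i) (degen X 0 2 x) = degen X 0 1 x"
      by (rule degen_act[OF sss x mono_face12[OF that(1)]])
    then show "sset_act (matching X 1) 2 1 (face_map i) \<tau> j = boundary_map X 1 (y i) j"
      using mapsp_face[OF yi] by (auto simp: matching_def \<tau>_def boundary_map_def bidx_def)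
  qed
  have y1: "\<forall>i\<le>2. i \<noteq> k \<longrightarrow> y i \<in> sset_carrier (ss_lev X 1) 1"
    using y by (simp add: mapsp_mem)
  obtain \<sigma> where \<sigma>: "\<sigma> \<in> sset_carrier (ss_lev X 1) 2" and p\<sigma>: "boundary_map X 1 \<sigma> = \<tau>"
    and fa: "\<forall>i\<le>2. i \<noteq> k \<longrightarrow> sset_act (ss_lev X 1) 2 1 (face_map i) \<sigma> = y i"
    using kf[unfolded kan_fibration_def, THEN conjunct2, rule_format, of 2 k y \<tau>] k y1 c \<tau> bd
    by auto
  have v: "ss_res X 1 0 (face_map l) \<sigma> = degen X 0 2 x" if "l \<le> 1" for l
    using fun_cong[OF p\<sigma>, of l] that by (simp add: boundary_map_def \<tau>_def bidx_def)
  have "ss_res X 1 0 (vtx 0) \<sigma> = ss_res X 1 0 (face_map 1) \<sigma>"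
    by (rule res_ext[OF sss _ \<sigma>]) (auto simp: face_map_def vtx_def)
  moreover have "ss_res X 1 0 (vtx 1) \<sigma> = ss_res X 1 0 (face_map 0) \<sigma>"
    by (rule res_ext[OF sss _ \<sigma>]) (auto simp: face_map_def vtx_def)
  ultimately have "\<sigma> \<in> sset_carrier (mapsp X x x) 2" using v[of 0] v[of 1] \<sigma> by (simp add: mapsp_mem)
  then show ?thesis using fa by blast
qed

lemma M_sset: "is_sset (mapsp X x x)" using mapsp_sset[OF sss x x] .

lemma M_L1: "e \<in> sset_carrier (mapsp X x x) k \<Longrightarrow> e \<in> sset_carrier (ss_lev X 1) k"
  by (simp add: mapsp_mem)

lemma edge_trans:
  assumes "edge_rel (mapsp X x x) u v" "edge_rel (mapsp X x x) v w"
  shows "edge_rel (mapsp X x x) u w"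
proof -
  obtain e1 where e1: "e1 \<in> sset_carrier (mapsp X x x) 1"
    "sset_act (ss_lev X 1) 1 0 (\<lambda>_. 0) e1 = u" "sset_act (ss_lev X 1) 1 0 (\<lambda>_. 1) e1 = v"
    using assms(1) unfolding edge_rel_def mapsp_act by blast
  obtain e2 where e2: "e2 \<in> sset_carrier (mapsp X x x) 1"
    "sset_act (ss_lev X 1) 1 0 (\<lambda>_. 0) e2 = v" "sset_act (ss_lev X 1) 1 0 (\<lambda>_. 1) e2 = w"
    using assms(2) unfolding edge_rel_def mapsp_act by blast
  define y where "y = (\<lambda>i::nat. if i = 0 then e2 else e1)"
  have "\<exists>\<sigma>\<in>sset_carrier (mapsp X x x) 2. \<forall>i\<le>2. i \<noteq> 1 \<longrightarrow> sset_act (ss_lev X 1) 2 1 (face_map i) \<sigma> = y i"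
  proof (rule mapsp_fill)
    show "\<forall>i\<le>2. i \<noteq> 1 \<longrightarrow> y i \<in> sset_carrier (mapsp X x x) 1" using e1 e2 by (simp add: y_def)
    have a: "sset_act (ss_lev X 1) 1 0 (face_map 0) e1 = v"
      using ss_vert_face01[OF lev[OF sss] M_L1[OF e1(1)], of 0] e1 by simp
    have b: "sset_act (ss_lev X 1) 1 0 (face_map 1) e2 = v"
      using ss_vert_face01[OF lev[OF sss] M_L1[OF e2(1)], of 1] e2 by simp
    show "\<forall>i j. i < j \<and> j \<le> 2 \<and> i \<noteq> 1 \<and> j \<noteq> 1 \<longrightarrow>
      sset_act (ss_lev X 1) 1 0 (face_map i) (y j) = sset_act (ss_lev X 1) 1 0 (face_map (j - 1)) (y i)"
    proof (intro allI impI)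
      fix i j :: nat assume "i < j \<and> j \<le> 2 \<and> i \<noteq> 1 \<and> j \<noteq> 1"
      then have "i = 0" "j = 2" by auto
      then show "sset_act (ss_lev X 1) 1 0 (face_map i) (y j) = sset_act (ss_lev X 1) 1 0 (face_map (j - 1)) (y i)"
        using a b by (simp add: y_def)
    qed
  qed simp
  then obtain \<sigma> where \<sigma>: "\<sigma> \<in> sset_carrier (mapsp X x x) 2"
    and f0: "sset_act (ss_lev X 1) 2 1 (face_map 0) \<sigma> = e2"
    and f2: "sset_act (ss_lev X 1) 2 1 (face_map 2) \<sigma> = e1"
    by (force simp: y_def)
  have \<sigma>1: "\<sigma> \<in> sset_carrier (ss_lev X 1) 2" using M_L1[OF \<sigma>] .
  define d where "d = sset_act (ss_lev X 1) 2 1 (face_map 1) \<sigma>"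
  have d: "d \<in> sset_carrier (mapsp X x x) 1"
    unfolding d_def using ss_closed[OF M_sset mono_face12 \<sigma>, of 1] by (simp add: mapsp_act)
  note vf = ss_vert_face[OF lev[OF sss] \<sigma>1]
  have "sset_act (ss_lev X 1) 1 0 (\<lambda>_. 0) d = u"
    using vf[of 1 0] vf[of 2 0] f2 e1 by (simp add: d_def face_map_def)
  moreover have "sset_act (ss_lev X 1) 1 0 (\<lambda>_. 1) d = w"
    using vf[of 1 1] vf[of 0 1] f0 e2 by (simp add: d_def face_map_def)
  ultimately show ?thesis using d unfolding edge_rel_def mapsp_act by blast
qed

lemma edge_sym:
  assumes "edge_rel (mapsp X x x) u v"
  shows "edge_rel (mapsp X x x) v u"
proof -
  obtain e where e: "e \<in> sset_carrier (mapsp X x x) 1"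
    "sset_act (ss_lev X 1) 1 0 (\<lambda>_. 0) e = u" "sset_act (ss_lev X 1) 1 0 (\<lambda>_. 1) e = v"
    using assms unfolding edge_rel_def mapsp_act by blast
  have u: "u \<in> sset_carrier (mapsp X x x) 0"
    using ss_closed[OF M_sset mono_const e(1), of 0 0] e by (simp add: mapsp_act)
  define s where "s = sset_act (ss_lev X 1) 0 1 (\<lambda>_. 0) u"
  have s: "s \<in> sset_carrier (mapsp X x x) 1"
    unfolding s_def using ss_degen_closed[OF M_sset u] by (simp add: mapsp_act)
  have sv: "sset_act (ss_lev X 1) 1 0 (\<lambda>_. v') s = u" if "v' \<le> 1" for v'
    unfolding s_def by (rule ss_vert_degen[OF lev[OF sss] M_L1[OF u] that])
  define y where "y = (\<lambda>i::nat. if i = 1 then s else e)"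
  have "\<exists>\<sigma>\<in>sset_carrier (mapsp X x x) 2. \<forall>i\<le>2. i \<noteq> 0 \<longrightarrow> sset_act (ss_lev X 1) 2 1 (face_map i) \<sigma> = y i"
  proof (rule mapsp_fill)
    show "\<forall>i\<le>2. i \<noteq> 0 \<longrightarrow> y i \<in> sset_carrier (mapsp X x x) 1" using e s by (simp add: y_def)
    have a: "sset_act (ss_lev X 1) 1 0 (face_map 1) e = u"
      using ss_vert_face01[OF lev[OF sss] M_L1[OF e(1)], of 1] e by simp
    have b: "sset_act (ss_lev X 1) 1 0 (face_map 1) s = u"
      using ss_vert_face01[OF lev[OF sss] M_L1[OF s], of 1] sv[of 0] by simp
    show "\<forall>i j. i < j \<and> j \<le> 2 \<and> i \<noteq> 0 \<and> j \<noteq> 0 \<longrightarrow>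
      sset_act (ss_lev X 1) 1 0 (face_map i) (y j) = sset_act (ss_lev X 1) 1 0 (face_map (j - 1)) (y i)"
    proof (intro allI impI)
      fix i j :: nat assume "i < j \<and> j \<le> 2 \<and> i \<noteq> 0 \<and> j \<noteq> 0"
      then have "i = 1" "j = 2" by auto
      then show "sset_act (ss_lev X 1) 1 0 (face_map i) (y j) = sset_act (ss_lev X 1) 1 0 (face_map (j - 1)) (y i)"
        using a b by (simp add: y_def)
    qed
  qed simp
  then obtain \<sigma> where \<sigma>: "\<sigma> \<in> sset_carrier (mapsp X x x) 2"
    and f1: "sset_act (ss_lev X 1) 2 1 (face_map 1) \<sigma> = s"
    and f2: "sset_act (ss_lev X 1) 2 1 (face_map 2) \<sigma> = e"
    by (force simp: y_def)
  have \<sigma>1: "\<sigma> \<in> sset_carrier (ss_lev X 1) 2" using M_L1[OF \<sigma>] .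
  define d where "d = sset_act (ss_lev X 1) 2 1 (face_map 0) \<sigma>"
  have d: "d \<in> sset_carrier (mapsp X x x) 1"
    unfolding d_def using ss_closed[OF M_sset mono_face12 \<sigma>, of 0] by (simp add: mapsp_act)
  note vf = ss_vert_face[OF lev[OF sss] \<sigma>1]
  have "sset_act (ss_lev X 1) 1 0 (\<lambda>_. 0) d = v"
    using vf[of 0 0] vf[of 2 1] f2 e by (simp add: d_def face_map_def)
  moreover have "sset_act (ss_lev X 1) 1 0 (\<lambda>_. 1) d = u"
    using vf[of 0 1] vf[of 1 1] f1 sv[of 1] by (simp add: d_def face_map_def)
  ultimately show ?thesis using d unfolding edge_rel_def mapsp_act by blast
qed


lemma CR_mem: "\<sigma> \<in> sset_carrier (CR X f z) k \<longleftrightarrow> \<sigma> \<in> sset_carrier (ss_lev X 2) k \<and>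
   ss_res X 2 1 (edge 1 2) \<sigma> = degen X 1 k f \<and> ss_res X 2 0 (vtx 0) \<sigma> = degen X 0 k z"
  by (simp add: CR_def sub_sset_def)

lemma CL_mem: "\<sigma> \<in> sset_carrier (CL X f z) k \<longleftrightarrow> \<sigma> \<in> sset_carrier (ss_lev X 2) k \<and>
   ss_res X 2 1 (edge 0 1) \<sigma> = degen X 1 k f \<and> ss_res X 2 0 (vtx 2) \<sigma> = degen X 0 k z"
  by (simp add: CL_def sub_sset_def)

lemma key:
  assumes qf: "quasi_unit X x f" and qg: "quasi_unit X x g"
  shows "edge_rel (mapsp X x x) f g"
proof -
  let ?M = "mapsp X x x"
  let ?L1 = "ss_lev X 1" and ?L2 = "ss_lev X 2"
  let ?\<phi>R = "ss_res X 2 1 (edge 0 1)" and ?\<psi> = "ss_res X 2 1 (edge 0 2)" and ?\<phi>L = "ss_res X 2 1 (edge 1 2)"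
  have f0: "f \<in> sset_carrier ?M 0" and g0: "g \<in> sset_carrier ?M 0"
    using qf qg unfolding quasi_unit_def by auto
  have f1: "f \<in> sset_carrier ?L1 0" and g1: "g \<in> sset_carrier ?L1 0" using f0 g0 by (auto simp: mapsp_mem)
  have hR: "ho_comp_inv_is_id (CR X f x) ?M ?\<phi>R ?\<psi>"
    using qf x unfolding quasi_unit_def by blast
  have hL: "ho_comp_inv_is_id (CL X g x) ?M ?\<phi>L ?\<psi>"
    using qg x unfolding quasi_unit_def by blast
  obtain GR where \<psi>R: "simplicial_map (CR X f x) ?M ?\<psi>" and \<phi>R: "simplicial_map (CR X f x) ?M ?\<phi>R"
    and GR: "simplicial_map ?M (CR X f x) GR"
    and hR1: "homotopic (CR X f x) (CR X f x) (GR \<circ> ?\<phi>R) (\<lambda>a. a)"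
    and hR2: "homotopic ?M ?M (?\<phi>R \<circ> GR) (\<lambda>b. b)"
    and hR3: "homotopic ?M ?M (?\<psi> \<circ> GR) (\<lambda>b. b)"
    using hR unfolding ho_comp_inv_is_id_def homotopy_inverse_def by blast
  obtain GL where \<psi>L: "simplicial_map (CL X g x) ?M ?\<psi>"
    and hL1: "homotopic (CL X g x) (CL X g x) (GL \<circ> ?\<phi>L) (\<lambda>a. a)"
    and hL3: "homotopic ?M ?M (?\<psi> \<circ> GL) (\<lambda>b. b)"
    using hL unfolding ho_comp_inv_is_id_def homotopy_inverse_def by blast
  define \<sigma>0 where "\<sigma>0 = GR g"
  have \<sigma>0: "\<sigma>0 \<in> sset_carrier (CR X f x) 0" using GR g0 unfolding simplicial_map_def \<sigma>0_def by blast
  have \<sigma>02: "\<sigma>0 \<in> sset_carrier ?L2 0" using \<sigma>0 by (simp add: CR_mem)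
  have "edge_rel ?M (?\<phi>R \<sigma>0) g"
    using homotopic_edge[OF hR2 M_sset g0] by (simp add: \<sigma>0_def)
  then obtain e where e: "e \<in> sset_carrier ?M 1"
    and e0: "sset_act ?L1 1 0 (\<lambda>_. 0) e = ?\<phi>R \<sigma>0" and e1: "sset_act ?L1 1 0 (\<lambda>_. 1) e = g"
    unfolding edge_rel_def mapsp_act by blast
  define c where "c = ?\<psi> \<sigma>0"
  have c0: "c \<in> sset_carrier ?M 0" using \<psi>R \<sigma>0 unfolding simplicial_map_def c_def by blast
  have c1: "c \<in> sset_carrier ?L1 0" using c0 by (simp add: mapsp_mem)
  define s0 where "s0 = (\<lambda>u. sset_act ?L1 0 1 (\<lambda>_. 0) u)"
  have s0M: "s0 u \<in> sset_carrier ?M 1" if "u \<in> sset_carrier ?M 0" for u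
    unfolding s0_def using ss_degen_closed[OF M_sset that] by (simp add: mapsp_act)
  have s0v: "sset_act ?L1 1 0 (\<lambda>_. v) (s0 u) = u" if "u \<in> sset_carrier ?L1 0" "v \<le> 1" for u v
    unfolding s0_def by (rule ss_vert_degen[OF lev[OF sss] that])
  define t where "t = (\<lambda>i::nat. if i = 0 then s0 f else if i = 1 then s0 c else e)"
  have tM: "t i \<in> sset_carrier ?M 1" for i using s0M[OF f0] s0M[OF c0] e by (simp add: t_def)
  have tL: "t i \<in> sset_carrier ?L1 1" for i using M_L1[OF tM] .
  define \<tau> where "\<tau> = (\<lambda>i. if i \<in> bidx 2 then t i else undefined)"
  have \<tau>: "\<tau> \<in> sset_carrier (matching X 2) 1"
    unfolding matching_def \<tau>_def using tL mapsp_face[OF tM] by (auto simp: bidx_def)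
  have tv: "sset_act ?L1 1 0 (\<lambda>_. v) (t i) = (if i = 0 then f else if i = 1 then c else if v = 0 then ?\<phi>R \<sigma>0 else g)"
    if "v \<le> 1" for i v
  proof -
    have "v = 0 \<or> v = 1" using that by auto
    then show ?thesis using that s0v[OF f1 that] s0v[OF c1 that] e0 e1 by (auto simp: t_def)
  qed
  have fe: "ss_res X 2 1 (face_map j) a = ss_res X 2 1 (if j = 0 then edge 1 2 else if j = 1 then edge 0 2 else edge 0 1) a"
    if "a \<in> sset_carrier ?L2 k" "j \<le> 2" for a j k
    by (rule res_ext[OF sss _ that(1)]) (use that(2) in \<open>auto simp: face_map_def edge_def\<close>)
  have f_deg: "degen X 1 0 f = f" using degen0[OF sss f1] .
  have \<sigma>0f: "?\<phi>L \<sigma>0 = f" using \<sigma>0 f_deg by (simp add: CR_mem)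
  have kf: "kan_fibration ?L2 (matching X 2) (boundary_map X 2)"
    using rf unfolding reedy_fibrant_def by blast
  have bd: "sset_act (matching X 2) 1 0 (face_map 1) \<tau> = boundary_map X 2 \<sigma>0"
  proof
    fix j
    show "sset_act (matching X 2) 1 0 (face_map 1) \<tau> j = boundary_map X 2 \<sigma>0 j"
    proof (cases "j \<le> 2")
      case True
      have "sset_act ?L1 1 0 (face_map 1) (t j) = sset_act ?L1 1 0 (\<lambda>_. 0) (t j)"
        using ss_vert_face01[OF lev[OF sss] tL, of 1] by simp
      then show ?thesis using True tv[of 0 j] fe[OF \<sigma>02 True] \<sigma>0f
        by (auto simp: matching_def \<tau>_def boundary_map_def bidx_def c_def)
    qed (auto simp: matching_def \<tau>_def boundary_map_def bidx_def)
  qed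
  have "\<exists>\<sigma>\<in>sset_carrier ?L2 1. boundary_map X 2 \<sigma> = \<tau> \<and>
      (\<forall>i\<le>1. i \<noteq> 0 \<longrightarrow> sset_act ?L2 1 (1 - 1) (face_map i) \<sigma> = \<sigma>0)"
  proof (rule kf[unfolded kan_fibration_def, THEN conjunct2, rule_format, of 1 0 "\<lambda>_. \<sigma>0" \<tau>], intro conjI)
    show "\<forall>i\<le>1. i \<noteq> 0 \<longrightarrow> sset_act (matching X 2) 1 (1 - 1) (face_map i) \<tau> = boundary_map X 2 ((\<lambda>_. \<sigma>0) i)"
    proof (intro allI impI)
      fix i :: nat assume "i \<le> 1" "i \<noteq> 0"
      then have "i = 1" by auto
      then show "sset_act (matching X 2) 1 (1 - 1) (face_map i) \<tau> = boundary_map X 2 ((\<lambda>_. \<sigma>0) i)"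
        using bd by simp
    qed
  qed (use \<sigma>02 \<tau> in auto)
  then obtain \<sigma> where \<sigma>: "\<sigma> \<in> sset_carrier ?L2 1" and p\<sigma>: "boundary_map X 2 \<sigma> = \<tau>"
    by auto
  define \<sigma>1 where "\<sigma>1 = sset_act ?L2 1 0 (face_map 0) \<sigma>"
  have \<sigma>1: "\<sigma>1 \<in> sset_carrier ?L2 0" unfolding \<sigma>1_def by (rule ss_closed[OF lev[OF sss] mono_face01 \<sigma>]) simp
  have "boundary_map X 2 \<sigma>1 = sset_act (matching X 2) 1 0 (face_map 0) (boundary_map X 2 \<sigma>)"
    using kf \<sigma> mono_face01[of 0] unfolding kan_fibration_def simplicial_map_def \<sigma>1_def by auto
  then have bd1: "boundary_map X 2 \<sigma>1 = sset_act (matching X 2) 1 0 (face_map 0) \<tau>" using p\<sigma> by simp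
  have face1: "ss_res X 2 1 (face_map j) \<sigma>1 = (if j = 0 then f else if j = 1 then c else g)" if "j \<le> 2" for j
  proof -
    have "ss_res X 2 1 (face_map j) \<sigma>1 = sset_act ?L1 1 0 (face_map 0) (t j)"
      using fun_cong[OF bd1, of j] that by (simp add: boundary_map_def matching_def \<tau>_def bidx_def)
    also have "\<dots> = sset_act ?L1 1 0 (\<lambda>_. 1) (t j)"
      using ss_vert_face01[OF lev[OF sss] tL, of 0] by simp
    finally show ?thesis using tv[of 1 j] by simp
  qed
  have gv: "ss_res X 1 0 (vtx 0) g = degen X 0 0 x" using g0 by (simp add: mapsp_mem)
  have fv: "ss_res X 1 0 (vtx 1) f = degen X 0 0 x" using f0 by (simp add: mapsp_mem)
  have "ss_res X 2 0 (vtx 0) \<sigma>1 = ss_res X 1 0 (vtx 0) (ss_res X 2 1 (face_map 2) \<sigma>1)"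
    by (subst res_comp[OF sss inj_face12 inj_vtx \<sigma>1]) (auto intro: res_ext[OF sss _ \<sigma>1] simp: face_map_def vtx_def)
  then have v0: "ss_res X 2 0 (vtx 0) \<sigma>1 = degen X 0 0 x" using face1[of 2] gv by simp
  have "ss_res X 2 0 (vtx 2) \<sigma>1 = ss_res X 1 0 (vtx 1) (ss_res X 2 1 (face_map 0) \<sigma>1)"
    by (subst res_comp[OF sss inj_face12 inj_vtx \<sigma>1]) (auto intro: res_ext[OF sss _ \<sigma>1] simp: face_map_def vtx_def)
  then have v2: "ss_res X 2 0 (vtx 2) \<sigma>1 = degen X 0 0 x" using face1[of 0] fv by simp
  have \<phi>R1: "?\<phi>R \<sigma>1 = g" using fe[OF \<sigma>1, of 2] face1[of 2] by simp
  have \<phi>L1: "?\<phi>L \<sigma>1 = f" using fe[OF \<sigma>1, of 0] face1[of 0] by simp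
  have g_deg: "degen X 1 0 g = g" using degen0[OF sss g1] .
  have \<sigma>1R: "\<sigma>1 \<in> sset_carrier (CR X f x) 0" using \<sigma>1 \<phi>L1 v0 f_deg by (simp add: CR_mem)
  have \<sigma>1L: "\<sigma>1 \<in> sset_carrier (CL X g x) 0" using \<sigma>1 \<phi>R1 v2 g_deg by (simp add: CL_mem)
  have CRs: "is_sset (CR X f x)" using CR_sset[OF sss f1 x] .
  have CLs: "is_sset (CL X g x)" using CL_sset[OF sss g1 x] .
  have r1: "edge_rel ?M (?\<psi> (GR g)) (?\<psi> \<sigma>1)"
    using edge_rel_map[OF \<psi>R homotopic_edge[OF hR1 CRs \<sigma>1R]] \<phi>R1 by simp
  have r2: "edge_rel ?M (?\<psi> (GR g)) g" using homotopic_edge[OF hR3 M_sset g0] by simp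
  have l1: "edge_rel ?M (?\<psi> (GL f)) (?\<psi> \<sigma>1)"
    using edge_rel_map[OF \<psi>L homotopic_edge[OF hL1 CLs \<sigma>1L]] \<phi>L1 by simp
  have l2: "edge_rel ?M (?\<psi> (GL f)) f" using homotopic_edge[OF hL3 M_sset f0] by simp
  have "edge_rel ?M f (?\<psi> \<sigma>1)" using edge_trans[OF edge_sym[OF l2] l1] .
  moreover have "edge_rel ?M (?\<psi> \<sigma>1) g" using edge_trans[OF edge_sym[OF r1] r2] .
  ultimately show ?thesis by (rule edge_trans)
qed

end

theorem mainTheorem1:
  fixes X :: "'a ssspace" and x :: 'a
  assumes "semiSegal X"
    and "x \<in> sset_carrier (ss_lev X 0) 0"
    and "sset_carrier (qu_sub X x) 0 \<noteq> {}"
  shows "sset_connected (qu_sub X x)"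
proof -
  have sss: "semi_simplicial_space X" and rf: "reedy_fibrant X" using assms(1) unfolding semiSegal_def by auto
  have act: "sset_act (qu_sub X x) = sset_act (ss_lev X 1)" by (simp add: qu_sub_def sub_sset_def mapsp_act)
  have qu0: "quasi_unit X x u" if "u \<in> sset_carrier (qu_sub X x) 0" for u
  proof -
    have u: "u \<in> sset_carrier (ss_lev X 1) 0" "quasi_unit X x (sset_act (ss_lev X 1) 0 0 (\<lambda>_. 0) u)"
      using that by (auto simp: qu_sub_def sub_sset_def mapsp_def)
    then show ?thesis using ss_id0[OF lev[OF sss] u(1)] by simp
  qed
  let ?E = "{(sset_act (qu_sub X x) 1 0 (\<lambda>_. 0) e, sset_act (qu_sub X x) 1 0 (\<lambda>_. 1) e) | e. e \<in> sset_carrier (qu_sub X x) 1}"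
  have "(u, v) \<in> ?E" if "u \<in> sset_carrier (qu_sub X x) 0" "v \<in> sset_carrier (qu_sub X x) 0" for u v
  proof -
    have qu: "quasi_unit X x u" "quasi_unit X x v" using qu0 that by auto
    obtain e where e: "e \<in> sset_carrier (mapsp X x x) 1"
      "sset_act (ss_lev X 1) 1 0 (\<lambda>_. 0) e = u" "sset_act (ss_lev X 1) 1 0 (\<lambda>_. 1) e = v"
      using key[OF sss rf assms(2) qu] unfolding edge_rel_def mapsp_act by blast
    have "\<forall>w\<le>1. quasi_unit X x (sset_act (mapsp X x x) 1 0 (\<lambda>_. w) e)"
    proof (intro allI impI)
      fix w :: nat assume "w \<le> 1"
      then have "w = 0 \<or> w = 1" by auto
      then show "quasi_unit X x (sset_act (mapsp X x x) 1 0 (\<lambda>_. w) e)" using e qu by (auto simp: mapsp_act)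
    qed
    then have "e \<in> sset_carrier (qu_sub X x) 1" using e(1) by (simp add: qu_sub_def sub_sset_def)
    then show ?thesis using e act by auto
  qed
  then show ?thesis using assms(3) unfolding sset_connected_def Let_def by blast
qed

end
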